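(* Let $p_{NS}\in(0,1)$ and let $P$ be a semi-distribution on a finite set $\mathcal{I}$ with $a(P)>p_{NS}$. Consider minimizing $\mathrm{KL}_b(P\|Q)$ over the set $S$ of semi-distributions $Q$ with $a(Q)\le a(P)$ and $\sup(Q)\subseteq\sup(P)$. Then: (1) For any $Q_1\in S$ having an item $i$ with $Q_1(i)\in(0,p_{NS}]$, there is $Q_2\in S$ with $Q_2(j)>p_{NS}$ for all $j\in\sup(Q_2)$ and $\mathrm{KL}_b(P\|Q_2)<\mathrm{KL}_b(P\|Q_1)$. Consequently, it suffices to minimize over $S_2=\{Q\in S: a(Q)=a(P),\ Q(j)>p_{NS}\ \forall j\in\sup(Q)\}$, and $S_2$ is non-empty. (2) The set $S^*\subseteq S_2$ of minimizers of $\mathrm{KL}_b(P\|\cdot)$ is non-empty, and for every $Q^*\in S^*$ there is a multiple $r\ge1$ with $Q^*(i)=r\,P(i)$ for all $i\in\sup(Q^* )$. (3) For any minimizer $Q^*$ and any items $i,j$ with $P(i)<P(j)$: if $Q^*(i)>0$ then $Q^*(j)>0$ (and then $Q^*(j)>Q^*(i)$).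
   Context: A semi-distribution on $\mathcal{I}$ is $W:\mathcal{I}\to[0,1]$ with $a(W):=\sum_iW(i)\le1$ and support $\sup(W)=\{i:W(i)>0\}$. A semi-distribution $P$ is called non-degenerate with respect to $p_{NS}$ if $a(P)>p_{NS}$. Bounded KL: $\mathrm{KL}_b(P\|Q):=\sum_{i\in\sup(P)}P(i)\ln\frac{P(i)}{\max(Q(i),p_{NS})}$. *)

theory Defs
  imports Complex_Main
begin

text \<open>The finite item set is modelled as the universe of a finite type 'i.\<close>

definition mass :: "('i::finite \<Rightarrow> real) \<Rightarrow> real" where
  "mass W = (\<Sum>i\<in>UNIV. W i)"

definition supp :: "('i \<Rightarrow> real) \<Rightarrow> 'i set" where
  "supp W = {i. W i > 0}"

definition semi_dist :: "('i::finite \<Rightarrow> real) \<Rightarrow> bool" where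
  "semi_dist W \<longleftrightarrow> (\<forall>i. 0 \<le> W i \<and> W i \<le> 1) \<and> mass W \<le> 1"

definition KLb :: "real \<Rightarrow> ('i \<Rightarrow> real) \<Rightarrow> ('i \<Rightarrow> real) \<Rightarrow> real" where
  "KLb pNS P Q = (\<Sum>i\<in>supp P. P i * ln (P i / max (Q i) pNS))"

definition feasible :: "('i::finite \<Rightarrow> real) \<Rightarrow> ('i \<Rightarrow> real) set" where
  "feasible P = {Q. semi_dist Q \<and> mass Q \<le> mass P \<and> supp Q \<subseteq> supp P}"

definition feasible2 :: "real \<Rightarrow> ('i::finite \<Rightarrow> real) \<Rightarrow> ('i \<Rightarrow> real) set" where
  "feasible2 pNS P = {Q \<in> feasible P. mass Q = mass P \<and> (\<forall>j\<in>supp Q. Q j > pNS)}"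

definition minimizers :: "real \<Rightarrow> ('i::finite \<Rightarrow> real) \<Rightarrow> ('i \<Rightarrow> real) set" where
  "minimizers pNS P = {Q \<in> feasible P. \<forall>Q'\<in>feasible P. KLb pNS P Q \<le> KLb pNS P Q'}"

end

theory Submission
  imports Defs
begin

lemma gibbs:
  fixes P x :: "'a \<Rightarrow> real"
  assumes fin: "finite T" and ne: "T \<noteq> {}" and Ppos: "\<forall>i\<in>T. P i > 0"
    and xpos: "\<forall>i\<in>T. x i > 0" and sx: "sum x T \<le> A" and A: "A > 0"
  defines "y \<equiv> \<lambda>i. A / sum P T * P i"
  shows "(\<Sum>i\<in>T. P i * ln (x i)) \<le> (\<Sum>i\<in>T. P i * ln (y i))"
    and "(\<exists>i\<in>T. x i \<noteq> y i) \<Longrightarrow> (\<Sum>i\<in>T. P i * ln (x i)) < (\<Sum>i\<in>T. P i * ln (y i))"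
proof -
  have SP: "sum P T > 0" using fin ne Ppos by (simp add: sum_pos)
  have ypos: "\<forall>i\<in>T. y i > 0" using SP A Ppos by (simp add: y_def)
  have key: "P i * (x i - y i) / y i = sum P T / A * (x i - y i)" if "i \<in> T" for i
  proof -
    have "P i > 0" using that Ppos by blast
    then have "P i / y i = sum P T / A" using SP A by (simp add: y_def field_simps)
    then show ?thesis by (metis times_divide_eq_left divide_divide_eq_left' mult.commute times_divide_eq_right)
  qed
  have sy: "sum y T = A" using SP unfolding y_def by (simp add: sum_distrib_left[symmetric] del: times_divide_eq_left) (simp add: field_simps)
  have R: "(\<Sum>i\<in>T. P i * (x i - y i) / y i) \<le> 0"
  proof -
    have "(\<Sum>i\<in>T. P i * (x i - y i) / y i) = (\<Sum>i\<in>T. sum P T / A * (x i - y i))"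
      using key by (rule sum.cong[OF refl])
    also have "\<dots> = sum P T / A * (sum x T - sum y T)"
      by (simp add: sum_distrib_left[symmetric] sum_subtractf del: times_divide_eq_left)
    also have "\<dots> \<le> 0" using sx sy SP A by (simp add: mult_nonneg_nonpos divide_nonpos_pos)
    finally show ?thesis .
  qed
  have D: "(\<Sum>i\<in>T. P i * ln (x i)) - (\<Sum>i\<in>T. P i * ln (y i)) = (\<Sum>i\<in>T. P i * (ln (x i) - ln (y i)))"
    by (simp add: sum_subtractf right_diff_distrib)
  have le: "P i * (ln (x i) - ln (y i)) \<le> P i * (x i - y i) / y i" if "i \<in> T" for i
    using ln_diff_le[of "x i" "y i"] that xpos ypos Ppos
    by (metis less_eq_real_def mult_left_mono times_divide_eq_right)
  show "(\<Sum>i\<in>T. P i * ln (x i)) \<le> (\<Sum>i\<in>T. P i * ln (y i))"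
    using sum_mono[of T "\<lambda>i. P i * (ln (x i) - ln (y i))" "\<lambda>i. P i * (x i - y i) / y i", OF le] D R
    by linarith
  assume "\<exists>i\<in>T. x i \<noteq> y i"
  then obtain k where k: "k \<in> T" "x k \<noteq> y k" by blast
  have lt: "P k * (ln (x k) - ln (y k)) < P k * (x k - y k) / y k"
    using ln_diff_less[of "x k" "y k"] k xpos ypos Ppos
    by (metis mult_strict_left_mono times_divide_eq_right)
  have "(\<Sum>i\<in>T. P i * (ln (x i) - ln (y i))) < (\<Sum>i\<in>T. P i * (x i - y i) / y i)"
    using sum_strict_mono_ex1[OF fin, of "\<lambda>i. P i * (ln (x i) - ln (y i))" "\<lambda>i. P i * (x i - y i) / y i"] le lt k by blast
  then show "(\<Sum>i\<in>T. P i * ln (x i)) < (\<Sum>i\<in>T. P i * ln (y i))" using D R by linarith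
qed


definition cand :: "('i::finite \<Rightarrow> real) \<Rightarrow> 'i set \<Rightarrow> 'i \<Rightarrow> real" where
  "cand P T i = (if i \<in> T then mass P / sum P T * P i else 0)"

definition phi :: "real \<Rightarrow> ('i \<Rightarrow> real) \<Rightarrow> ('i \<Rightarrow> real) \<Rightarrow> real" where
  "phi pNS P Q = (\<Sum>i\<in>supp P. P i * ln (max (Q i) pNS))"

lemma KLb_phi:
  assumes "0 < pNS"
  shows "KLb pNS P Q = (\<Sum>i\<in>supp P. P i * ln (P i)) - phi pNS P Q"
proof -
  have "KLb pNS P Q = (\<Sum>i\<in>supp P. P i * ln (P i) - P i * ln (max (Q i) pNS))"
    unfolding KLb_def
  proof (rule sum.cong[OF refl])
    fix i assume "i \<in> supp P"
    then have "P i > 0" by (simp add: supp_def)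
    moreover have "max (Q i) pNS > 0" using assms by simp
    ultimately show "P i * ln (P i / max (Q i) pNS) = P i * ln (P i) - P i * ln (max (Q i) pNS)"
      by (simp add: ln_div right_diff_distrib)
  qed
  then show ?thesis unfolding phi_def by (simp add: sum_subtractf)
qed

lemma sum_two_diff:
  fixes f g :: "'a \<Rightarrow> real"
  assumes "finite S" "i \<in> S" "j \<in> S" "i \<noteq> j" "\<forall>k\<in>S - {i, j}. f k = g k"
  shows "sum f S - sum g S = f i + f j - g i - g j"
proof -
  have r: "sum h S = h i + h j + sum h (S - {i, j})" for h :: "'a \<Rightarrow> real"
  proof -
    have "sum h S = h i + sum h (S - {i})" using assms by (simp add: sum.remove)
    moreover have "sum h (S - {i}) = h j + sum h (S - {i} - {j})" using assms by (intro sum.remove) auto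
    moreover have "S - {i} - {j} = S - {i, j}" by blast
    ultimately show ?thesis by simp
  qed
  have "sum f S = f i + f j + sum f (S - {i, j})" by (rule r)
  moreover have "sum g S = g i + g j + sum g (S - {i, j})" by (rule r)
  moreover have "sum f (S - {i, j}) = sum g (S - {i, j})" using assms(5) by (intro sum.cong) auto
  ultimately show ?thesis by simp
qed

context
  fixes pNS :: real and P :: "'i::finite \<Rightarrow> real"
  assumes A0: "0 < pNS" and A1: "pNS < 1"
    and SD: "semi_dist P" and MP: "mass P > pNS"
begin

lemma Pnn: "P i \<ge> 0" using SD by (simp add: semi_dist_def)

lemma mass_le1: "mass P \<le> 1" using SD by (simp add: semi_dist_def)

lemma sumP_le: "sum P T \<le> mass P"
  unfolding mass_def by (rule sum_mono2) (auto simp: Pnn)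

lemma suppP_ne: "supp P \<noteq> {}"
proof
  assume "supp P = {}"
  then have "\<forall>i. P i = 0" using Pnn by (auto simp: supp_def less_le)
  then have "mass P = 0" by (simp add: mass_def)
  then show False using MP A0 by simp
qed

lemma sumP_pos: "T \<subseteq> supp P \<Longrightarrow> T \<noteq> {} \<Longrightarrow> sum P T > 0"
  by (rule sum_pos) (auto simp: supp_def)

lemma cand_props:
  assumes "T \<subseteq> supp P" "T \<noteq> {}"
  shows "cand P T \<in> feasible P" "supp (cand P T) = T" "mass (cand P T) = mass P"
    "\<forall>i\<in>T. cand P T i > 0"
proof -
  have SP: "sum P T > 0" using sumP_pos assms by blast
  have c: "mass P / sum P T > 0" using SP MP A0 by simp
  show pos: "\<forall>i\<in>T. cand P T i > 0"
  proof
    fix i assume i: "i \<in> T"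
    then have "P i > 0" using assms by (auto simp: supp_def)
    then show "cand P T i > 0" using i c by (simp add: cand_def del: times_divide_eq_left)
  qed
  show sp: "supp (cand P T) = T" using pos by (auto simp: supp_def cand_def)
  have "mass (cand P T) = (\<Sum>i\<in>T. mass P / sum P T * P i)"
    unfolding mass_def cand_def by (simp add: sum.If_cases)
  also have "\<dots> = mass P" using SP by (simp add: sum_distrib_left[symmetric] del: times_divide_eq_left) (simp add: field_simps)
  finally show ms: "mass (cand P T) = mass P" .
  have "cand P T i \<le> 1" for i
  proof (cases "i \<in> T")
    case True
    have "P i \<le> sum P T" using True by (rule member_le_sum) (auto simp: Pnn)
    then have "mass P / sum P T * P i \<le> mass P / sum P T * sum P T"
      using c by (intro mult_left_mono) auto
    also have "\<dots> = mass P" using SP by simp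
    finally show ?thesis using True mass_le1 by (simp add: cand_def)
  qed (simp add: cand_def)
  moreover have "cand P T i \<ge> 0" for i using c Pnn[of i] by (simp add: cand_def del: times_divide_eq_left)
  ultimately show "cand P T \<in> feasible P"
    using ms sp assms mass_le1 by (simp add: feasible_def semi_dist_def)
qed

lemma feas_props:
  assumes "Q \<in> feasible P"
  shows "\<forall>i. 0 \<le> Q i \<and> Q i \<le> 1" "mass Q \<le> mass P" "supp Q \<subseteq> supp P"
  using assms by (auto simp: feasible_def semi_dist_def)

lemma phi_split:
  assumes "Q \<in> feasible P"
  shows "phi pNS P Q = (\<Sum>i\<in>{i. Q i > pNS}. P i * ln (Q i)) + (\<Sum>i\<in>supp P - {i. Q i > pNS}. P i * ln pNS)"
proof -
  let ?T = "{i. Q i > pNS}"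
  have TS: "?T \<subseteq> supp P"
  proof
    fix x assume "x \<in> ?T"
    then have "x \<in> supp Q" using A0 by (simp add: supp_def)
    then show "x \<in> supp P" using feas_props(3)[OF assms] by blast
  qed
  have "phi pNS P Q = (\<Sum>i\<in>supp P - ?T. P i * ln (max (Q i) pNS)) + (\<Sum>i\<in>?T. P i * ln (max (Q i) pNS))"
    unfolding phi_def using TS by (simp add: sum.subset_diff[of ?T "supp P"])
  also have "(\<Sum>i\<in>?T. P i * ln (max (Q i) pNS)) = (\<Sum>i\<in>?T. P i * ln (Q i))"
    by (rule sum.cong) auto
  also have "(\<Sum>i\<in>supp P - ?T. P i * ln (max (Q i) pNS)) = (\<Sum>i\<in>supp P - ?T. P i * ln pNS)"
    by (rule sum.cong) auto
  finally show ?thesis by simp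
qed


lemma T_sub:
  assumes "Q \<in> feasible P"
  shows "{i. Q i > pNS} \<subseteq> supp P"
proof
  fix x assume "x \<in> {i. Q i > pNS}"
  then have "x \<in> supp Q" using A0 by (simp add: supp_def)
  then show "x \<in> supp P" using feas_props(3)[OF assms] by blast
qed

lemma mass_cand_T:
  assumes "T \<subseteq> supp P" "T \<noteq> {}"
  shows "sum (cand P T) T = mass P"
proof -
  have "mass (cand P T) = sum (cand P T) T"
    unfolding mass_def by (rule sum.mono_neutral_right) (auto simp: cand_def)
  then show ?thesis using cand_props(3)[OF assms] by simp
qed

lemma M_lemma:
  assumes Q: "Q \<in> feasible P" and ne: "{i. Q i > pNS} \<noteq> {}" and neq: "Q \<noteq> cand P {i. Q i > pNS}"
  shows "phi pNS P Q < phi pNS P (cand P {i. Q i > pNS})"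
proof -
  define T where "T = {i. Q i > pNS}"
  have TS: "T \<subseteq> supp P" using T_sub[OF Q] by (simp add: T_def)
  have neT: "T \<noteq> {}" using ne by (simp add: T_def)
  have fin: "finite T" by simp
  define C where "C = cand P T"
  have Cpos: "\<forall>i\<in>T. C i > 0" using cand_props(4)[OF TS neT] by (simp add: C_def)
  have Ppos: "\<forall>i\<in>T. P i > 0" using TS by (auto simp: supp_def)
  have Qnn: "\<forall>i. Q i \<ge> 0" using feas_props(1)[OF Q] by blast
  have phiC: "phi pNS P C \<ge> (\<Sum>i\<in>T. P i * ln (C i)) + (\<Sum>i\<in>supp P - T. P i * ln pNS)"
  proof -
    have e1: "phi pNS P C = (\<Sum>i\<in>supp P - T. P i * ln (max (C i) pNS)) + (\<Sum>i\<in>T. P i * ln (max (C i) pNS))"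
      unfolding phi_def using TS by (simp add: sum.subset_diff[of T "supp P"])
    have e2: "(\<Sum>i\<in>supp P - T. P i * ln (max (C i) pNS)) = (\<Sum>i\<in>supp P - T. P i * ln pNS)"
      by (rule sum.cong) (auto simp: C_def cand_def A0 less_imp_le)
    have e3: "(\<Sum>i\<in>T. P i * ln (max (C i) pNS)) \<ge> (\<Sum>i\<in>T. P i * ln (C i))"
    proof (rule sum_mono)
      fix i assume i: "i \<in> T"
      have ci: "C i > 0" using Cpos i by blast
      have "ln (C i) \<le> ln (max (C i) pNS)" using ci by (subst ln_le_cancel_iff) auto
      then show "P i * ln (C i) \<le> P i * ln (max (C i) pNS)"
        using Ppos i by (simp add: mult_left_mono)
    qed
    show ?thesis using e1 e2 e3 by linarith
  qed
  have phiQ: "phi pNS P Q = (\<Sum>i\<in>T. P i * ln (Q i)) + (\<Sum>i\<in>supp P - T. P i * ln pNS)"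
    using phi_split[OF Q] by (simp add: T_def)
  have sQ: "sum Q T \<le> mass P"
  proof -
    have "sum Q T \<le> mass Q" unfolding mass_def by (rule sum_mono2) (auto simp: Qnn)
    then show ?thesis using feas_props(2)[OF Q] by simp
  qed
  have strict: "(\<Sum>i\<in>T. P i * ln (Q i)) < (\<Sum>i\<in>T. P i * ln (C i))"
  proof (cases "\<exists>i\<in>T. Q i \<noteq> C i")
    case True
    have Qpos: "\<forall>i\<in>T. Q i > 0" using A0 by (auto simp: T_def)
    have eqC: "\<forall>i\<in>T. C i = mass P / sum P T * P i" by (simp add: C_def cand_def)
    have "(\<Sum>i\<in>T. P i * ln (Q i)) < (\<Sum>i\<in>T. P i * ln (mass P / sum P T * P i))"
      using gibbs(2)[OF fin neT Ppos Qpos sQ, of] True eqC MP A0 by force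
    also have "\<dots> = (\<Sum>i\<in>T. P i * ln (C i))" using eqC by (intro sum.cong) auto
    finally show ?thesis .
  next
    case False
    then have eqT: "\<forall>i\<in>T. Q i = C i" by blast
    obtain k where k: "Q k \<noteq> C k" using neq by (auto simp: C_def T_def)
    then have kT: "k \<notin> T" using eqT by blast
    then have "C k = 0" by (simp add: C_def cand_def)
    then have Qk: "Q k > 0" using k Qnn by (metis less_eq_real_def)
    have "sum Q T = mass P" using eqT mass_cand_T[OF TS neT] by (simp add: C_def)
    then have "sum Q (insert k T) = Q k + mass P" using kT by simp
    moreover have "sum Q (insert k T) \<le> mass Q" unfolding mass_def by (rule sum_mono2) (auto simp: Qnn)
    ultimately show ?thesis using Qk feas_props(2)[OF Q] by simp
  qed
  show ?thesis using phiC phiQ strict by (simp add: C_def T_def)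
qed

lemma M0_lemma:
  assumes Q: "Q \<in> feasible P" and e: "{i. Q i > pNS} = {}" and j: "j \<in> supp P"
  shows "phi pNS P Q < phi pNS P (cand P {j})"
proof -
  have phiQ: "phi pNS P Q = (\<Sum>i\<in>supp P. P i * ln pNS)"
    using phi_split[OF Q] e by simp
  have Pj: "P j > 0" using j by (simp add: supp_def)
  have Cj: "cand P {j} j = mass P" using Pj by (simp add: cand_def)
  have le: "P i * ln pNS \<le> P i * ln (max (cand P {j} i) pNS)" if "i \<in> supp P" for i
  proof -
    have "ln pNS \<le> ln (max (cand P {j} i) pNS)" using A0 by simp
    then show ?thesis using that by (simp add: supp_def mult_left_mono)
  qed
  have lt: "P j * ln pNS < P j * ln (max (cand P {j} j) pNS)"
    using Cj MP A0 Pj by simp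
  have "(\<Sum>i\<in>supp P. P i * ln pNS) < (\<Sum>i\<in>supp P. P i * ln (max (cand P {j} i) pNS))"
    using sum_strict_mono_ex1[of "supp P" "\<lambda>i. P i * ln pNS" "\<lambda>i. P i * ln (max (cand P {j} i) pNS)"]
      le lt j by auto
  then show ?thesis using phiQ by (simp add: phi_def)
qed

lemma Bmain:
  assumes Q: "Q \<in> feasible P"
  shows "(Q = cand P {i. Q i > pNS} \<and> {i. Q i > pNS} \<noteq> {}) \<or>
         (\<exists>T. T \<subseteq> supp P \<and> T \<noteq> {} \<and> phi pNS P Q < phi pNS P (cand P T))"
proof (cases "{i. Q i > pNS} = {}")
  case True
  obtain j where "j \<in> supp P" using suppP_ne by blast
  then show ?thesis using M0_lemma[OF Q True] by blast
next
  case False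
  show ?thesis
  proof (cases "Q = cand P {i. Q i > pNS}")
    case True then show ?thesis using False by blast
  next
    case neq: False
    then show ?thesis using M_lemma[OF Q False neq] T_sub[OF Q] False by blast
  qed
qed

lemma KLb_lt: "KLb pNS P Q < KLb pNS P Q' \<longleftrightarrow> phi pNS P Q' < phi pNS P Q"
  using KLb_phi[OF A0, of P Q] KLb_phi[OF A0, of P Q'] by linarith

lemma min_char:
  assumes Qs: "Qs \<in> minimizers pNS P"
  shows "Qs = cand P {i. Qs i > pNS} \<and> {i. Qs i > pNS} \<noteq> {} \<and> {i. Qs i > pNS} \<subseteq> supp P"
proof -
  have F: "Qs \<in> feasible P" and mn: "\<forall>Q'\<in>feasible P. KLb pNS P Qs \<le> KLb pNS P Q'"
    using Qs by (auto simp: minimizers_def)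
  have "\<not> (\<exists>T. T \<subseteq> supp P \<and> T \<noteq> {} \<and> phi pNS P Qs < phi pNS P (cand P T))"
  proof
    assume "\<exists>T. T \<subseteq> supp P \<and> T \<noteq> {} \<and> phi pNS P Qs < phi pNS P (cand P T)"
    then obtain T where T: "T \<subseteq> supp P" "T \<noteq> {}" "phi pNS P Qs < phi pNS P (cand P T)" by blast
    then have "KLb pNS P (cand P T) < KLb pNS P Qs" using KLb_lt by blast
    moreover have "cand P T \<in> feasible P" using cand_props(1)[OF T(1,2)] .
    ultimately show False using mn by force
  qed
  then show ?thesis using Bmain[OF F] T_sub[OF F] by blast
qed

lemma main_ctx:
  shows "(\<forall>Q1\<in>feasible P. (\<exists>i. 0 < Q1 i \<and> Q1 i \<le> pNS) \<longrightarrow>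
            (\<exists>Q2\<in>feasible P. (\<forall>j\<in>supp Q2. Q2 j > pNS) \<and> KLb pNS P Q2 < KLb pNS P Q1))
       \<and> (\<forall>Q\<in>feasible P. \<exists>Q'\<in>feasible2 pNS P. KLb pNS P Q' \<le> KLb pNS P Q)
       \<and> feasible2 pNS P \<noteq> {}
       \<and> minimizers pNS P \<noteq> {}
       \<and> minimizers pNS P \<subseteq> feasible2 pNS P
       \<and> (\<forall>Qs\<in>minimizers pNS P. \<exists>r\<ge>1. \<forall>i\<in>supp Qs. Qs i = r * P i)
       \<and> (\<forall>Qs\<in>minimizers pNS P. \<forall>i j. P i < P j \<longrightarrow> Qs i > 0 \<longrightarrow> Qs j > 0 \<and> Qs j > Qs i)"
proof -
  define F where "F = cand P ` {T. T \<subseteq> supp P \<and> T \<noteq> {}}"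
  have finF: "finite F" unfolding F_def by simp
  have neF: "F \<noteq> {}" using suppP_ne unfolding F_def by blast
  define m where "m = arg_min_on (KLb pNS P) F"
  have mF: "m \<in> F" and mmin: "\<not> (\<exists>x\<in>F. KLb pNS P x < KLb pNS P m)"
    using arg_min_if_finite[OF finF neF, of "KLb pNS P"] by (auto simp: m_def)
  have Ffeas: "F \<subseteq> feasible P" unfolding F_def using cand_props(1) by blast
  have mle: "KLb pNS P m \<le> KLb pNS P Q" if Q: "Q \<in> feasible P" for Q
    using Bmain[OF Q]
  proof
    assume "Q = cand P {i. Q i > pNS} \<and> {i. Q i > pNS} \<noteq> {}"
    then have "Q \<in> F" unfolding F_def using T_sub[OF Q] by blast
    then show ?thesis using mmin by force
  next
    assume "\<exists>T. T \<subseteq> supp P \<and> T \<noteq> {} \<and> phi pNS P Q < phi pNS P (cand P T)"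
    then obtain T where T: "T \<subseteq> supp P" "T \<noteq> {}" "phi pNS P Q < phi pNS P (cand P T)" by blast
    then have "KLb pNS P (cand P T) < KLb pNS P Q" using KLb_lt by blast
    moreover have "cand P T \<in> F" unfolding F_def using T by blast
    ultimately show ?thesis using mmin by force
  qed
  have mM: "m \<in> minimizers pNS P" using mF Ffeas mle by (auto simp: minimizers_def)
  have M2: "minimizers pNS P \<subseteq> feasible2 pNS P"
  proof
    fix Qs assume Qs: "Qs \<in> minimizers pNS P"
    define T where "T = {i. Qs i > pNS}"
    have c: "Qs = cand P T" "T \<noteq> {}" "T \<subseteq> supp P" using min_char[OF Qs] by (auto simp: T_def)
    have "supp Qs = T" using cand_props(2)[OF c(3,2)] c(1) by simp
    moreover have "mass Qs = mass P" using cand_props(3)[OF c(3,2)] c(1) by simp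
    moreover have "Qs \<in> feasible P" using Qs by (simp add: minimizers_def)
    ultimately show "Qs \<in> feasible2 pNS P" by (auto simp: feasible2_def T_def)
  qed
  have P1: "\<forall>Q1\<in>feasible P. (\<exists>i. 0 < Q1 i \<and> Q1 i \<le> pNS) \<longrightarrow>
            (\<exists>Q2\<in>feasible P. (\<forall>j\<in>supp Q2. Q2 j > pNS) \<and> KLb pNS P Q2 < KLb pNS P Q1)"
  proof (intro ballI impI)
    fix Q1 assume Q1: "Q1 \<in> feasible P" and "\<exists>i. 0 < Q1 i \<and> Q1 i \<le> pNS"
    then obtain i where i: "0 < Q1 i" "Q1 i \<le> pNS" by blast
    have m2: "m \<in> feasible2 pNS P" using mM M2 by blast
    have "\<not> (Q1 = cand P {i. Q1 i > pNS})"
    proof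
      assume "Q1 = cand P {i. Q1 i > pNS}"
      then have "cand P {i. Q1 i > pNS} i > 0" using i by simp
      then have "i \<in> {i. Q1 i > pNS}" by (auto simp: cand_def split: if_splits)
      then show False using i by simp
    qed
    then obtain T where T: "T \<subseteq> supp P" "T \<noteq> {}" "phi pNS P Q1 < phi pNS P (cand P T)"
      using Bmain[OF Q1] by blast
    then have "KLb pNS P (cand P T) < KLb pNS P Q1" using KLb_lt by blast
    moreover have "KLb pNS P m \<le> KLb pNS P (cand P T)" using mle cand_props(1)[OF T(1,2)] by blast
    ultimately show "\<exists>Q2\<in>feasible P. (\<forall>j\<in>supp Q2. Q2 j > pNS) \<and> KLb pNS P Q2 < KLb pNS P Q1"
      using m2 by (intro bexI[of _ m]) (auto simp: feasible2_def)
  qed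
  have P6: "\<forall>Qs\<in>minimizers pNS P. \<exists>r\<ge>1. \<forall>i\<in>supp Qs. Qs i = r * P i"
  proof
    fix Qs assume Qs: "Qs \<in> minimizers pNS P"
    define T where "T = {i. Qs i > pNS}"
    have c: "Qs = cand P T" "T \<noteq> {}" "T \<subseteq> supp P" using min_char[OF Qs] by (auto simp: T_def)
    have sp: "supp Qs = T" using cand_props(2)[OF c(3,2)] c(1) by simp
    have "sum P T > 0" using sumP_pos c by blast
    then have "mass P / sum P T \<ge> 1" using sumP_le[of T] by simp
    moreover have "\<forall>i\<in>supp Qs. Qs i = mass P / sum P T * P i" using sp c(1) by (simp add: cand_def)
    ultimately show "\<exists>r\<ge>1. \<forall>i\<in>supp Qs. Qs i = r * P i" by blast
  qed
  have P7: "\<forall>Qs\<in>minimizers pNS P. \<forall>i j. P i < P j \<longrightarrow> Qs i > 0 \<longrightarrow> Qs j > 0 \<and> Qs j > Qs i"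
  proof (intro ballI allI impI)
    fix Qs i j assume Qs: "Qs \<in> minimizers pNS P" and ij: "P i < P j" and Qi: "Qs i > 0"
    define T where "T = {i. Qs i > pNS}"
    have c: "Qs = cand P T" "T \<noteq> {}" "T \<subseteq> supp P" using min_char[OF Qs] by (auto simp: T_def)
    have sp: "supp Qs = T" using cand_props(2)[OF c(3,2)] c(1) by simp
    have F: "Qs \<in> feasible P" and mn: "\<forall>Q'\<in>feasible P. KLb pNS P Qs \<le> KLb pNS P Q'"
      using Qs by (auto simp: minimizers_def)
    have Qnn: "\<forall>k. 0 \<le> Qs k \<and> Qs k \<le> 1" using feas_props(1)[OF F] .
    have iT: "i \<in> T" using Qi sp by (auto simp: supp_def)
    have iP: "i \<in> supp P" using iT c(3) by blast
    have jP: "j \<in> supp P" using ij Pnn[of i] by (simp add: supp_def)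
    have ineq: "i \<noteq> j" using ij by auto
    have jT: "j \<in> T"
    proof (rule ccontr)
      assume jT: "j \<notin> T"
      then have Qj: "Qs j = 0" using sp Qnn by (auto simp: supp_def less_le)
      define Q2 where "Q2 = Qs(i := 0, j := Qs i)"
      have Q2i: "Q2 i = 0" "Q2 j = Qs i" using ineq by (auto simp: Q2_def)
      have agree: "\<forall>k\<in>UNIV - {i, j}. Q2 k = Qs k" by (auto simp: Q2_def)
      have "sum Q2 UNIV - sum Qs UNIV = Q2 i + Q2 j - Qs i - Qs j"
        by (rule sum_two_diff) (use ineq agree in auto)
      then have mass2: "mass Q2 = mass Qs" using Q2i Qj by (simp add: mass_def)
      have "supp Q2 \<subseteq> supp P"
      proof
        fix k assume "k \<in> supp Q2"
        then have k: "Q2 k > 0" by (simp add: supp_def)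
        show "k \<in> supp P"
        proof (cases "k = j")
          case True then show ?thesis using jP by simp
        next
          case False
          then have "k \<noteq> i" using k Q2i by auto
          then have "Qs k > 0" using k False by (simp add: Q2_def)
          then show ?thesis using feas_props(3)[OF F] by (auto simp: supp_def)
        qed
      qed
      moreover have "\<forall>k. 0 \<le> Q2 k \<and> Q2 k \<le> 1" using Qnn by (simp add: Q2_def)
      ultimately have F2: "Q2 \<in> feasible P"
        using F mass2 by (auto simp: feasible_def semi_dist_def)
      have Qip: "Qs i > pNS" using iT by (simp add: T_def)
      have "phi pNS P Q2 - phi pNS P Qs =
            P i * ln (max (Q2 i) pNS) + P j * ln (max (Q2 j) pNS) - P i * ln (max (Qs i) pNS) - P j * ln (max (Qs j) pNS)"
        unfolding phi_def by (rule sum_two_diff) (use iP jP ineq in \<open>auto simp: Q2_def\<close>)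
      also have "\<dots> = (P j - P i) * (ln (Qs i) - ln pNS)"
        using Q2i Qj Qip A0 by (simp add: max_def algebra_simps)
      also have "\<dots> > 0" using ij Qip A0 by simp
      finally have "phi pNS P Qs < phi pNS P Q2" by simp
      then have "KLb pNS P Q2 < KLb pNS P Qs" using KLb_lt by blast
      then show False using mn F2 by force
    qed
    have pi: "P i > 0" using iP by (simp add: supp_def)
    have r: "mass P / sum P T > 0" using sumP_pos[OF c(3,2)] MP A0 by simp
    have "Qs j = mass P / sum P T * P j" "Qs i = mass P / sum P T * P i"
      using c(1) jT iT by (simp_all add: cand_def del: times_divide_eq_left)
    then show "Qs j > 0 \<and> Qs j > Qs i" using r ij pi by (simp add: mult_strict_left_mono del: times_divide_eq_left)
  qed
  have P2: "\<forall>Q\<in>feasible P. \<exists>Q'\<in>feasible2 pNS P. KLb pNS P Q' \<le> KLb pNS P Q"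
    using mM M2 mle by blast
  show ?thesis using P1 P2 mM M2 P6 P7 by blast
qed

end

theorem lemma8:
  fixes pNS :: real and P :: "'i::finite \<Rightarrow> real"
  assumes "0 < pNS" and "pNS < 1"
    and "semi_dist P" and "mass P > pNS"
  shows "(\<forall>Q1\<in>feasible P. (\<exists>i. 0 < Q1 i \<and> Q1 i \<le> pNS) \<longrightarrow>
            (\<exists>Q2\<in>feasible P. (\<forall>j\<in>supp Q2. Q2 j > pNS) \<and> KLb pNS P Q2 < KLb pNS P Q1))
       \<and> (\<forall>Q\<in>feasible P. \<exists>Q'\<in>feasible2 pNS P. KLb pNS P Q' \<le> KLb pNS P Q)
       \<and> feasible2 pNS P \<noteq> {}
       \<and> minimizers pNS P \<noteq> {}
       \<and> minimizers pNS P \<subseteq> feasible2 pNS P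
       \<and> (\<forall>Qs\<in>minimizers pNS P. \<exists>r\<ge>1. \<forall>i\<in>supp Qs. Qs i = r * P i)
       \<and> (\<forall>Qs\<in>minimizers pNS P. \<forall>i j. P i < P j \<longrightarrow> Qs i > 0 \<longrightarrow> Qs j > 0 \<and> Qs j > Qs i)"
  using main_ctx[OF assms] .

end
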